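(* Under the setup of the context (where forward invariance of $\mathcal X\times\mathcal Z$ is NOT assumed), let Assumptions (A1)–(A3) hold, let $\xi\ge\mathsf{osLip}_x(f)$ and let $\zeta>0$ satisfy $\mathsf{osLip}(x\mapsto f(x,z^*(x)))\le-\zeta$. Fix $n\in\mathbb Z_{>0}$ and $T$ with $0<T<T(n)$, where $T(n)$ is as defined in the context. Suppose there exist subsets $\mathcal X_0\subseteq\mathcal X$ and $\mathcal Z_0\subseteq\mathcal Z$ such that every solution of the interconnected system with initial condition in $\mathcal X_0\times\mathcal Z_0$ remains in $\mathcal X\times\mathcal Z$ for all $t\ge0$. Then there exist $\eta\in\mathbb R^2_{>0}$, $\varrho>0$ and $\alpha>0$ (depending only on $n$, $T$ and the constants above) such that for every solution with $x(0)\in\mathcal X_0$, $z(0)\in\mathcal Z_0$, $$\big\|(\|x(t)\|_{\mathcal X},\|z(t)\|_{\mathcal Z})\big\|_{2,[\eta]}\le\varrho e^{-\alpha t}\big\|(\|x(0)\|_{\mathcal X},\|z(0)\|_{\mathcal Z})\big\|_{2,[\eta]}\quad\forall t\ge0,$$ with $\|(v_1,v_2)\|_{2,[\eta]}:=\sqrt{\eta_1v_1^2+\eta_2v_2^2}$.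
   Context: Setup. $\|\cdot\|_{\mathcal X}$ norm on $\mathbb R^{n_x}$, $\|\cdot\|_{\mathcal Z}$ norm on $\mathbb R^{n_z}$, $\mathcal X,\mathcal Z$ convex. $f:\mathcal X\times\mathcal Z\to\mathbb R^{n_x}$, $\mathsf G:\mathcal X\times\mathcal Z\to\mathcal Z$ continuous, $\mathsf G^1=\mathsf G$, $\mathsf G^{m+1}(x,z)=\mathsf G(x,\mathsf G^m(x,z))$. Interconnected system: $\dot x(t)=f(x(t),z(t))$, $z_k=\mathsf G^n(x(kT),z_{k-1})$, $z(t)=z_k$ for $t\in[kT,(k+1)T)$; $f(0,0)=0$, $\mathsf G(0,0)=0$. $z^*(x)$ is the unique fixed point of $z\mapsto\mathsf G(x,z)$. $\mathsf{Lip}_z(f):=\sup_x\sup_{z_1\ne z_2}\|f(x,z_1)-f(x,z_2)\|_{\mathcal X}/\|z_1-z_2\|_{\mathcal Z}$; $\mathsf{Lip}_x(f),\mathsf{Lip}_x(\mathsf G),\mathsf{Lip}_z(\mathsf G)$ analogously. With a weak pairing $\llbracket\cdot;\cdot\rrbracket$ compatible with $\|\cdot\|_{\mathcal X}$: $\mathsf{osLip}_x(f):=\sup_z\sup_{x_1\ne x_2}\llbracket f(x_1,z)-f(x_2,z);x_1-x_2\rrbracket/\|x_1-x_2\|^2_{\mathcal X}$, $\mathsf{osLip}(F)$ analogous for $F:\mathcal X\to\mathbb R^{n_x}$. Assumptions: (A1) $\mathsf{Lip}_x(f)<\infty$; (A2) $\mathsf{Lip}_z(f),\mathsf{Lip}_x(\mathsf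 G)\in(0,\infty)$; (A3) $\mathsf{Lip}_z(\mathsf G)<1$. $T(n)$: with $C_1:=\frac{\mathsf{Lip}_z(f)\mathsf{Lip}_x(\mathsf G)}{1-\mathsf{Lip}_z(\mathsf G)}\big(\mathsf{Lip}_x(f)+\frac{\mathsf{Lip}_z(f)\mathsf{Lip}_x(\mathsf G)}{1-\mathsf{Lip}_z(\mathsf G)}\big)$ and $C_2(n):=[\mathsf{Lip}_z(\mathsf G)]^n\frac{\mathsf{Lip}_x(\mathsf G)\mathsf{Lip}_z(f)}{1-\mathsf{Lip}_z(\mathsf G)}$, $T(n):=\frac1\xi\log\big(\frac{\xi(1-[\mathsf{Lip}_z(\mathsf G)]^n)}{C_2(n)+C_1/\zeta}+1\big)$ if $\xi\ne0$ (interpreted as $+\infty$ if the log argument is $\le0$) and $T(n):=\frac{1-[\mathsf{Lip}_z(\mathsf G)]^n}{C_2(n)+C_1/\zeta}$ if $\xi=0$. *)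

theory Defs
  imports "HOL-Analysis.Analysis"
begin

definition is_norm :: "('a::real_vector \<Rightarrow> real) \<Rightarrow> bool" where
  "is_norm N \<longleftrightarrow> (\<forall>x. 0 \<le> N x) \<and> (\<forall>x. N x = 0 \<longleftrightarrow> x = 0)
     \<and> (\<forall>c x. N (c *\<^sub>R x) = \<bar>c\<bar> * N x) \<and> (\<forall>x y. N (x + y) \<le> N x + N y)"

text \<open>Weak pairing (Davydov--Jafarpour--Bullo) compatible with the norm N and satisfying
  Deimling's inequality.\<close>
definition compatible_weak_pairing ::
  "('a::real_normed_vector \<Rightarrow> real) \<Rightarrow> ('a \<Rightarrow> 'a \<Rightarrow> real) \<Rightarrow> bool" where
  "compatible_weak_pairing N WP \<longleftrightarrow>
     (\<forall>x1 x2 y. WP (x1 + x2) y \<le> WP x1 y + WP x2 y)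
   \<and> (\<forall>y. continuous_on UNIV (\<lambda>x. WP x y))
   \<and> (\<forall>x y a. 0 \<le> a \<longrightarrow> WP (a *\<^sub>R x) y = a * WP x y \<and> WP x (a *\<^sub>R y) = a * WP x y)
   \<and> (\<forall>x y. WP (- x) (- y) = WP x y)
   \<and> (\<forall>x y. \<bar>WP x y\<bar> \<le> sqrt (WP x x) * sqrt (WP y y))
   \<and> (\<forall>x. x \<noteq> 0 \<longrightarrow> WP x x > 0)
   \<and> (\<forall>x. WP x x = (N x)\<^sup>2)
   \<and> (\<forall>x y. WP x y \<le> N y * Lim (at_right 0) (\<lambda>h::real. (N (y + h *\<^sub>R x) - N y) / h))"

text \<open>Lipschitz constants (as extended reals; the sup of the empty set is -\<infinity>,
  whose real value is 0).\<close>
definition Lip_z :: "('z::ab_group_add \<Rightarrow> real) \<Rightarrow> ('y::ab_group_add \<Rightarrow> real) \<Rightarrow> 'x set \<Rightarrow> 'z set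
    \<Rightarrow> ('x \<Rightarrow> 'z \<Rightarrow> 'y) \<Rightarrow> ereal" where
  "Lip_z Nz Ny X Z f =
     Sup {ereal (Ny (f x z1 - f x z2) / Nz (z1 - z2)) | x z1 z2. x \<in> X \<and> z1 \<in> Z \<and> z2 \<in> Z \<and> z1 \<noteq> z2}"

definition Lip_x :: "('x::ab_group_add \<Rightarrow> real) \<Rightarrow> ('y::ab_group_add \<Rightarrow> real) \<Rightarrow> 'x set \<Rightarrow> 'z set
    \<Rightarrow> ('x \<Rightarrow> 'z \<Rightarrow> 'y) \<Rightarrow> ereal" where
  "Lip_x Nx Ny X Z f =
     Sup {ereal (Ny (f x1 z - f x2 z) / Nx (x1 - x2)) | x1 x2 z. x1 \<in> X \<and> x2 \<in> X \<and> x1 \<noteq> x2 \<and> z \<in> Z}"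

definition osLip_x :: "('x::ab_group_add \<Rightarrow> 'x \<Rightarrow> real) \<Rightarrow> ('x \<Rightarrow> real) \<Rightarrow> 'x set \<Rightarrow> 'z set
    \<Rightarrow> ('x \<Rightarrow> 'z \<Rightarrow> 'x) \<Rightarrow> ereal" where
  "osLip_x WP Nx X Z f =
     Sup {ereal (WP (f x1 z - f x2 z) (x1 - x2) / (Nx (x1 - x2))\<^sup>2) | x1 x2 z.
            x1 \<in> X \<and> x2 \<in> X \<and> x1 \<noteq> x2 \<and> z \<in> Z}"

definition osLip :: "('x::ab_group_add \<Rightarrow> 'x \<Rightarrow> real) \<Rightarrow> ('x \<Rightarrow> real) \<Rightarrow> 'x set
    \<Rightarrow> ('x \<Rightarrow> 'x) \<Rightarrow> ereal" where
  "osLip WP Nx X F =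
     Sup {ereal (WP (F x1 - F x2) (x1 - x2) / (Nx (x1 - x2))\<^sup>2) | x1 x2. x1 \<in> X \<and> x2 \<in> X \<and> x1 \<noteq> x2}"

definition zstar :: "('x \<Rightarrow> 'z \<Rightarrow> 'z) \<Rightarrow> 'z set \<Rightarrow> 'x \<Rightarrow> 'z" where
  "zstar G Z x = (THE z. z \<in> Z \<and> G x z = z)"

text \<open>The bound T(n) (as an extended real, +\<infinity> when the log argument is \<le> 0).
  Arguments: \<xi>, \<zeta>, Lip_x(f), Lip_z(f), Lip_x(G), Lip_z(G), n.\<close>
definition Tbound :: "real \<Rightarrow> real \<Rightarrow> real \<Rightarrow> real \<Rightarrow> real \<Rightarrow> real \<Rightarrow> nat \<Rightarrow> ereal" where
  "Tbound \<xi> \<zeta> Lxf Lzf LxG LzG n =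
    (let C1 = Lzf * LxG / (1 - LzG) * (Lxf + Lzf * LxG / (1 - LzG));
         C2 = LzG ^ n * LxG * Lzf / (1 - LzG);
         D = C2 + C1 / \<zeta>
     in if \<xi> = 0 then ereal ((1 - LzG ^ n) / D)
        else (let a = \<xi> * (1 - LzG ^ n) / D + 1
              in if a \<le> 0 then \<infinity> else ereal (ln a / \<xi>)))"

definition is_solution :: "('x::real_normed_vector \<Rightarrow> 'z \<Rightarrow> 'x) \<Rightarrow> ('x \<Rightarrow> 'z \<Rightarrow> 'z) \<Rightarrow> nat
    \<Rightarrow> real \<Rightarrow> (real \<Rightarrow> 'x) \<Rightarrow> (real \<Rightarrow> 'z) \<Rightarrow> bool" where
  "is_solution f G n T x z \<longleftrightarrow>
     continuous_on {0..} x
   \<and> (\<forall>t\<ge>0. (x has_vector_derivative f (x t) (z t)) (at t within {t..}))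
   \<and> (\<exists>zs. (\<forall>t\<ge>0. z t = zs (nat \<lfloor>t / T\<rfloor>))
          \<and> (\<forall>k. zs (Suc k) = (G (x (real (Suc k) * T)) ^^ n) (zs k)))"

end

theory Submission
  imports Defs
begin


lemma cont_induct_right:
  fixes w :: "real \<Rightarrow> real"
  assumes cont: "continuous_on {a..b} w" and wa: "w a \<le> 0"
    and step: "\<And>t. a \<le> t \<Longrightarrow> t < b \<Longrightarrow> w t \<le> 0 \<Longrightarrow> eventually (\<lambda>y. w y \<le> 0) (at_right t)"
  shows "\<forall>t\<in>{a..b}. w t \<le> 0"
proof (rule ccontr)
  assume "\<not> ?thesis"
  then obtain t' where t': "t' \<in> {a..b}" "w t' > 0" by force
  define S where "S = {s\<in>{a..b}. w s > 0}"
  define t1 where "t1 = Inf S"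
  have Sne: "S \<noteq> {}" using t' S_def by blast
  have Sbdd: "bdd_below S" unfolding S_def by (rule bdd_belowI[of _ a]) auto
  have t1le: "t1 \<le> t'" unfolding t1_def by (rule cInf_lower) (use t' S_def Sbdd in auto)
  have at1: "a \<le> t1" unfolding t1_def by (rule cInf_greatest[OF Sne]) (auto simp: S_def)
  have lowS: "\<And>s. s \<in> S \<Longrightarrow> t1 \<le> s" unfolding t1_def using Sbdd by (auto intro: cInf_lower)
  have wt1: "w t1 \<le> 0"
  proof (rule ccontr)
    assume neg: "\<not> w t1 \<le> 0"
    show False
    proof (cases "t1 = a")
      case True then show False using neg wa by simp
    next
      case False
      then have "a < t1" using at1 by simp
      have t1in: "t1 \<in> {a..b}" using at1 t1le t' by auto
      have "((\<lambda>s. w s) \<longlongrightarrow> w t1) (at t1 within {a..b})"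
        using cont t1in by (simp add: continuous_on_def)
      then have "eventually (\<lambda>s. w s > 0) (at t1 within {a..b})"
        using neg by (intro order_tendstoD) auto
      then obtain d where d: "d > 0" "\<And>s. s \<in> {a..b} \<Longrightarrow> s \<noteq> t1 \<Longrightarrow> dist s t1 < d \<Longrightarrow> w s > 0"
        unfolding eventually_at by blast
      define s where "s = max a (t1 - d/2)"
      have "s \<in> {a..b}" "s \<noteq> t1" "dist s t1 < d" using `a < t1` d(1) t1in
        by (auto simp: s_def dist_real_def)
      then have "s \<in> S" using d(2) S_def by auto
      then have "t1 \<le> s" by (rule lowS)
      then show False using `a < t1` d(1) by (auto simp: s_def)
    qed
  qed
  have "t1 < t'" using wt1 t'(2) t1le by (cases "t1 = t'") auto
  then have "t1 < b" using t' by auto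
  from step[OF at1 this wt1] obtain b' where b': "b' > t1" "\<And>y. y > t1 \<Longrightarrow> y < b' \<Longrightarrow> w y \<le> 0"
    unfolding eventually_at_right_field by blast
  have "\<exists>s\<in>S. s < b'" using b'(1) unfolding t1_def by (subst cInf_less_iff[symmetric, OF Sne Sbdd]) auto
  then obtain s where s: "s \<in> S" "s < b'" by blast
  have "t1 \<le> s" using lowS s(1) .
  moreover have "s \<noteq> t1" using s(1) wt1 S_def by auto
  ultimately have "w s \<le> 0" using b' s by auto
  then show False using s(1) S_def by auto
qed

lemma deriv_right_lower:
  fixes v :: "real \<Rightarrow> real"
  assumes "(v has_real_derivative D) (at t)" "e > 0"
  shows "eventually (\<lambda>y. v t + (y - t) * (D - e) \<le> v y) (at_right t)"
proof -
  have "(v has_real_derivative D) (at t within {t<..})"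
    using assms(1) by (rule has_field_derivative_at_within)
  then have "((\<lambda>y. (v y - v t) / (y - t)) \<longlongrightarrow> D) (at_right t)"
    by (simp add: has_field_derivative_iff)
  then have "eventually (\<lambda>y. D - e < (v y - v t) / (y - t)) (at_right t)"
    using assms(2) by (intro order_tendstoD(1)) auto
  then show ?thesis using eventually_at_right_less[of t]
  proof eventually_elim
    case (elim y)
    then have "(D - e) * (y - t) < v y - v t" by (simp add: pos_less_divide_eq)
    then show ?case by (simp add: algebra_simps)
  qed
qed

lemma vec_deriv_right:
  fixes x :: "real \<Rightarrow> 'a::real_normed_vector"
  assumes "(x has_vector_derivative v) (at t within {t..})" "e > 0"
  shows "eventually (\<lambda>y. norm (x y - x t - (y - t) *\<^sub>R v) \<le> e * (y - t)) (at_right t)"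
proof -
  have "((\<lambda>y. (1 / norm (y - t)) *\<^sub>R (x y - (x t + (y - t) *\<^sub>R v))) \<longlongrightarrow> 0) (at t within {t..})"
    using assms(1) unfolding has_vector_derivative_def has_derivative_within by blast
  then have "((\<lambda>y. (1 / norm (y - t)) *\<^sub>R (x y - (x t + (y - t) *\<^sub>R v))) \<longlongrightarrow> 0) (at_right t)"
    by (rule tendsto_within_subset) auto
  then have "((\<lambda>y. norm ((1 / norm (y - t)) *\<^sub>R (x y - (x t + (y - t) *\<^sub>R v)))) \<longlongrightarrow> 0) (at_right t)"
    by (rule tendsto_norm_zero)
  then have "eventually (\<lambda>y. norm ((1 / norm (y - t)) *\<^sub>R (x y - (x t + (y - t) *\<^sub>R v))) < e) (at_right t)"
    using assms(2) by (rule order_tendstoD(2))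
  then show ?thesis using eventually_at_right_less[of t]
  proof eventually_elim
    case (elim y)
    then have "norm (x y - (x t + (y - t) *\<^sub>R v)) / (y - t) < e" by simp
    then have "norm (x y - (x t + (y - t) *\<^sub>R v)) < e * (y - t)" using elim(2) by (simp add: pos_divide_less_eq)
    then show ?case by (simp add: algebra_simps)
  qed
qed

definition phi :: "real \<Rightarrow> real \<Rightarrow> real" where
  "phi l s = (if l = 0 then s else (exp (l * s) - 1) / l)"

lemma phi_deriv: "((\<lambda>s. phi l s) has_real_derivative exp (l * s)) (at s)"
proof (cases "l = 0")
  case True then show ?thesis by (simp add: phi_def)
next
  case False
  have "((\<lambda>s. (exp (l * s) - 1) / l) has_real_derivative (exp (l * s) * l) / l) (at s)"
    by (auto intro!: derivative_eq_intros)
  then show ?thesis using False by (simp add: phi_def)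
qed

lemma phi_eq: "l * phi l s + 1 = exp (l * s)"
  by (simp add: phi_def)

lemma phi_nonneg: assumes "s \<ge> 0" shows "phi l s \<ge> 0"
proof -
  consider "l = 0" | "l > 0" | "l < 0" by linarith
  then show ?thesis
  proof cases
    case 2 then have "exp (l * s) \<ge> 1" using assms by simp
    then show ?thesis using 2 by (simp add: phi_def)
  next
    case 3 then have "exp (l * s) \<le> 1" using assms by (simp add: mult_nonpos_nonneg)
    then show ?thesis using 3 by (simp add: phi_def divide_nonpos_neg)
  qed (use assms in \<open>simp add: phi_def\<close>)
qed

lemma phi_0: "phi l 0 = 0" by (simp add: phi_def)

lemma lin_compare:
  fixes u :: "real \<Rightarrow> real"
  assumes cont: "continuous_on {a..b} u"
    and dini: "\<And>t e. a \<le> t \<Longrightarrow> t < b \<Longrightarrow> e > 0 \<Longrightarrow>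
         eventually (\<lambda>y. u y \<le> u t + (y - t) * (l * u t + c + e)) (at_right t)"
  shows "\<forall>t\<in>{a..b}. u t \<le> exp (l * (t - a)) * u a + c * phi l (t - a)"
proof
  fix t assume t: "t \<in> {a..b}"
  have key: "u t \<le> exp (l * (t - a)) * u a + c * phi l (t - a) + e * (exp (l * (t - a)) + phi l (t - a))"
    if e: "e > 0" for e
  proof -
    define v where "v s = exp (l * (s - a)) * (u a + e) + (c + e) * phi l (s - a)" for s
    have vd: "(v has_real_derivative (l * v s + c + e)) (at s)" for s
    proof -
      have d1: "((\<lambda>s. exp (l * (s - a))) has_real_derivative exp (l * (s - a)) * l) (at s)"
        by (auto intro!: derivative_eq_intros)
      have d2: "((\<lambda>s. phi l (s - a)) has_real_derivative exp (l * (s - a)) * 1) (at s)"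
        by (rule DERIV_chain2[OF phi_deriv]) (auto intro!: derivative_eq_intros)
      have "(v has_real_derivative (exp (l * (s - a)) * l * (u a + e) + (c + e) * (exp (l * (s - a)) * 1))) (at s)"
        unfolding v_def
        by (intro DERIV_add DERIV_cmult DERIV_cmult_right d1 d2)
      moreover have "exp (l * (s - a)) * l * (u a + e) + (c + e) * (exp (l * (s - a)) * 1) = l * v s + c + e"
      proof -
        have "(c + e) * exp (l * (s - a)) = (c + e) * (l * phi l (s - a) + 1)" by (simp add: phi_eq)
        then show ?thesis unfolding v_def by (simp add: algebra_simps)
      qed
      ultimately show ?thesis by simp
    qed
    have vcont: "continuous_on {a..b} v"
      using vd by (meson DERIV_continuous continuous_at_imp_continuous_on)
    have "\<forall>s\<in>{a..b}. u s - v s \<le> 0"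
    proof (rule cont_induct_right)
      show "continuous_on {a..b} (\<lambda>s. u s - v s)" using cont vcont by (intro continuous_intros)
      show "u a - v a \<le> 0" using e by (simp add: v_def phi_0)
    next
      fix s assume s: "a \<le> s" "s < b" "u s - v s \<le> 0"
      have e2: "e / 2 > 0" using e by simp
      have ev1: "eventually (\<lambda>y. u y \<le> u s + (y - s) * (l * u s + c + e / 2)) (at_right s)"
        using dini[OF s(1,2) e2] .
      have ev2: "eventually (\<lambda>y. v s + (y - s) * ((l * v s + c + e) - e / 2) \<le> v y) (at_right s)"
        using deriv_right_lower[OF vd e2] .
      have ev3: "eventually (\<lambda>y. 1 + l * (y - s) \<ge> 0) (at_right s)"
      proof -
        have "((\<lambda>y. 1 + l * (y - s)) \<longlongrightarrow> 1 + l * (s - s)) (at_right s)"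
          by (intro tendsto_intros)
        then have "eventually (\<lambda>y. 1 + l * (y - s) > 0) (at_right s)"
          by (intro order_tendstoD(1)) auto
        then show ?thesis by eventually_elim simp
      qed
      show "eventually (\<lambda>y. u y - v y \<le> 0) (at_right s)"
        using ev1 ev2 ev3 eventually_at_right_less[of s]
      proof eventually_elim
        case (elim y)
        have "u y - v y \<le> (u s - v s) * (1 + l * (y - s))"
          using elim(1,2) by (simp add: algebra_simps)
        also have "\<dots> \<le> 0" using s(3) elim(3) by (simp add: mult_nonpos_nonneg)
        finally show ?case .
      qed
    qed
    then have "u t \<le> v t" using t by auto
    then show ?thesis unfolding v_def by (simp add: algebra_simps)
  qed
  show "u t \<le> exp (l * (t - a)) * u a + c * phi l (t - a)"
  proof (rule field_le_epsilon)
    fix e :: real assume e: "e > 0"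
    define K where "K = exp (l * (t - a)) + phi l (t - a) + 1"
    have "phi l (t - a) \<ge> 0" using t by (intro phi_nonneg) auto
    then have K: "K > 0" unfolding K_def by (smt (verit) exp_gt_zero)
    have "u t \<le> exp (l * (t - a)) * u a + c * phi l (t - a) + (e / K) * (exp (l * (t - a)) + phi l (t - a))"
      using key[of "e / K"] e K by simp
    also have "(e / K) * (exp (l * (t - a)) + phi l (t - a)) \<le> e"
      using K e unfolding K_def by (simp add: divide_simps)
    finally show "u t \<le> exp (l * (t - a)) * u a + c * phi l (t - a) + e" by simp
  qed
qed




lemma isn_nonneg: "is_norm N \<Longrightarrow> 0 \<le> N x" by (simp add: is_norm_def)
lemma isn_zero_iff: "is_norm N \<Longrightarrow> N x = 0 \<longleftrightarrow> x = 0" by (simp add: is_norm_def)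
lemma isn_scale: "is_norm N \<Longrightarrow> N (c *\<^sub>R x) = \<bar>c\<bar> * N x" by (simp add: is_norm_def)
lemma isn_tri: "is_norm N \<Longrightarrow> N (x + y) \<le> N x + N y" by (simp add: is_norm_def)
lemma isn_0: "is_norm N \<Longrightarrow> N 0 = 0" by (simp add: is_norm_def)
lemma isn_pos: "is_norm N \<Longrightarrow> x \<noteq> 0 \<Longrightarrow> 0 < N x"
  using isn_nonneg isn_zero_iff by (metis order_le_less)
lemma isn_minus: "is_norm N \<Longrightarrow> N (- x) = N x"
  using isn_scale[of N "-1" x] by simp
lemma isn_commute: "is_norm N \<Longrightarrow> N (x - y) = N (y - x)"
  using isn_minus[of N "x - y"] by simp
lemma isn_tri_diff: "is_norm N \<Longrightarrow> N (x - y) \<le> N x + N y"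
  using isn_tri[of N x "- y"] isn_minus[of N y] by simp
lemma isn_rev_tri: "is_norm N \<Longrightarrow> \<bar>N x - N y\<bar> \<le> N (x - y)"
proof -
  assume n: "is_norm N"
  have "N x \<le> N (x - y) + N y" using isn_tri[OF n, of "x - y" y] by simp
  moreover have "N y \<le> N (y - x) + N x" using isn_tri[OF n, of "y - x" x] by simp
  ultimately show ?thesis using isn_commute[OF n, of x y] by linarith
qed
lemma isn_sum: assumes n: "is_norm N" and fin: "finite A" shows "N (sum g A) \<le> (\<Sum>i\<in>A. N (g i))"
  using fin
proof (induction A rule: finite_induct)
  case empty then show ?case by (simp add: isn_0[OF n])
next
  case (insert a A)
  then show ?case using isn_tri[OF n, of "g a" "sum g A"] by simp
qed

lemma isn_bound:
  fixes N :: "'a::euclidean_space \<Rightarrow> real"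
  assumes n: "is_norm N"
  shows "\<exists>K>0. \<forall>x. N x \<le> K * norm x"
proof -
  define K where "K = (\<Sum>i\<in>Basis. N i) + 1"
  have "(\<Sum>i\<in>Basis. N i) \<ge> 0" by (intro sum_nonneg) (simp add: isn_nonneg[OF n])
  then have K0: "K > 0" unfolding K_def by simp
  have "N x \<le> K * norm x" for x
  proof -
    have "N x = N (\<Sum>i\<in>Basis. (x \<bullet> i) *\<^sub>R i)" by (simp add: euclidean_representation)
    also have "\<dots> \<le> (\<Sum>i\<in>Basis. N ((x \<bullet> i) *\<^sub>R i))" by (rule isn_sum[OF n]) simp
    also have "\<dots> = (\<Sum>i\<in>Basis. \<bar>x \<bullet> i\<bar> * N i)" by (simp add: isn_scale[OF n])
    also have "\<dots> \<le> (\<Sum>i\<in>Basis. norm x * N i)"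
      by (rule sum_mono) (simp add: mult_right_mono Basis_le_norm isn_nonneg[OF n])
    also have "\<dots> = norm x * (\<Sum>i\<in>Basis. N i)" by (simp add: sum_distrib_left)
    also have "\<dots> \<le> K * norm x" unfolding K_def by (simp add: algebra_simps)
    finally show ?thesis .
  qed
  then show ?thesis using K0 by blast
qed

lemma isn_tendsto:
  fixes N :: "'a::euclidean_space \<Rightarrow> real"
  assumes n: "is_norm N" and lim: "(g \<longlongrightarrow> l) F"
  shows "((\<lambda>s. N (g s)) \<longlongrightarrow> N l) F"
proof -
  obtain K where K: "K > 0" "\<forall>x. N x \<le> K * norm x" using isn_bound[OF n] by blast
  have "((\<lambda>s. g s - l) \<longlongrightarrow> 0) F" using lim by (simp add: Lim_null[symmetric])
  then have "((\<lambda>s. norm (g s - l)) \<longlongrightarrow> 0) F" by (rule tendsto_norm_zero)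
  then have lim0: "((\<lambda>s. K * norm (g s - l)) \<longlongrightarrow> 0) F" by (rule tendsto_mult_right_zero)
  have ev: "\<forall>s. norm (N (g s) - N l) \<le> norm (K * norm (g s - l)) * 1"
  proof
    fix s
    have "\<bar>N (g s) - N l\<bar> \<le> N (g s - l)" by (rule isn_rev_tri[OF n])
    also have "\<dots> \<le> K * norm (g s - l)" using K by blast
    finally show "norm (N (g s) - N l) \<le> norm (K * norm (g s - l)) * 1" using K(1) by simp
  qed
  have "((\<lambda>s. N (g s) - N l) \<longlongrightarrow> 0) F"
    by (rule tendsto_0_le[OF lim0 always_eventually[OF ev]])
  then show ?thesis by (simp add: Lim_null[symmetric])
qed

lemma isn_continuous_on:
  fixes N :: "'a::euclidean_space \<Rightarrow> real"
  assumes n: "is_norm N" and c: "continuous_on S g"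
  shows "continuous_on S (\<lambda>s. N (g s))"
  using c unfolding continuous_on_def by (auto intro: isn_tendsto[OF n])




lemma wp_beuler:
  assumes n: "is_norm N" and wp: "compatible_weak_pairing N WP" and h: "h \<ge> 0"
    and os: "y \<noteq> 0 \<Longrightarrow> WP d y \<le> c * (N y)\<^sup>2"
  shows "(1 - h * c) * N y \<le> N (y - h *\<^sub>R d)"
proof (cases "y = 0")
  case True then show ?thesis using isn_0[OF n] isn_nonneg[OF n] by simp
next
  case False
  define w where "w = y - h *\<^sub>R d"
  have sub: "WP (w + h *\<^sub>R d) y \<le> WP w y + WP (h *\<^sub>R d) y"
    using wp unfolding compatible_weak_pairing_def by blast
  have hom: "WP (h *\<^sub>R d) y = h * WP d y"
    using wp h unfolding compatible_weak_pairing_def by blast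
  have cs: "\<bar>WP w y\<bar> \<le> sqrt (WP w w) * sqrt (WP y y)"
    using wp unfolding compatible_weak_pairing_def by blast
  have sq: "\<And>v. WP v v = (N v)\<^sup>2"
    using wp unfolding compatible_weak_pairing_def by blast
  have sqrtN: "\<And>v. sqrt (WP v v) = N v" using sq isn_nonneg[OF n] by simp
  have "w + h *\<^sub>R d = y" by (simp add: w_def)
  then have "(N y)\<^sup>2 \<le> WP w y + h * WP d y" using sub hom sq[of y] by simp
  also have "WP w y \<le> N w * N y" using cs sqrtN by (smt (verit))
  also have "h * WP d y \<le> h * (c * (N y)\<^sup>2)" using os[OF False] h by (rule mult_left_mono)
  finally have "(N y)\<^sup>2 \<le> N w * N y + h * c * (N y)\<^sup>2" by simp
  then have "N y * N y \<le> (N w + h * c * N y) * N y" by (simp add: power2_eq_square algebra_simps)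
  then have "N y \<le> N w + h * c * N y" using isn_pos[OF n False] by simp
  then show ?thesis unfolding w_def by (simp add: algebra_simps)
qed

lemma ereal_Sup_bound:
  fixes S :: "ereal set"
  assumes "Sup S < \<infinity>" "ereal r \<in> S"
  shows "r \<le> real_of_ereal (Sup S)"
proof -
  have le: "ereal r \<le> Sup S" using assms(2) by (rule Sup_upper)
  then have "Sup S \<noteq> -\<infinity>" by auto
  then obtain q where "Sup S = ereal q" using assms(1) by (cases "Sup S") auto
  then show ?thesis using le by simp
qed

lemma ereal_Sup_nonneg:
  fixes S :: "ereal set"
  assumes "\<forall>s\<in>S. 0 \<le> s"
  shows "0 \<le> real_of_ereal (Sup S)"
proof (cases "S = {}")
  case True then show ?thesis by (simp add: bot_ereal_def)
next
  case False
  then obtain s where "s \<in> S" by blast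
  then have "0 \<le> Sup S" using assms by (meson Sup_upper order_trans)
  then show ?thesis by (simp add: real_of_ereal_pos)
qed

lemma ereal_Sup_le:
  fixes S :: "ereal set"
  assumes "Sup S \<le> ereal c" "ereal r \<in> S"
  shows "r \<le> c"
proof -
  have "ereal r \<le> Sup S" using assms(2) by (rule Sup_upper)
  then have "ereal r \<le> ereal c" using assms(1) by (rule order_trans)
  then show ?thesis by simp
qed

lemma dini_norm:
  fixes x :: "real \<Rightarrow> 'a::euclidean_space" and F :: "'a \<Rightarrow> 'a"
  assumes n: "is_norm N" and wp: "compatible_weak_pairing N WP"
    and deriv: "(x has_vector_derivative v) (at t within {t..})"
    and xcont: "(x \<longlongrightarrow> x t) (at_right t)"
    and os: "\<forall>s>t. x s - p \<noteq> 0 \<longrightarrow> WP (F (x s) - F p) (x s - p) \<le> c * (N (x s - p))\<^sup>2"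
    and lip: "\<forall>s>t. N (v - F (x s)) \<le> Bv + M * N (x t - x s)"
    and e: "e > 0"
  shows "eventually (\<lambda>s. N (x s - p) \<le> N (x t - p) + (s - t) * (c * N (x t - p) + Bv + N (F p) + e)) (at_right t)"
proof -
  obtain K where K: "K > 0" "\<forall>w. N w \<le> K * norm w" using isn_bound[OF n] by blast
  have e3: "e / (3 * K) > 0" using e K by simp
  have ev1: "eventually (\<lambda>s. norm (x s - x t - (s - t) *\<^sub>R v) \<le> e / (3 * K) * (s - t)) (at_right t)"
    by (rule vec_deriv_right[OF deriv e3])
  have "((\<lambda>s. x t - x s) \<longlongrightarrow> x t - x t) (at_right t)" using xcont by (intro tendsto_intros)
  then have "((\<lambda>s. N (x t - x s)) \<longlongrightarrow> N (x t - x t)) (at_right t)" by (rule isn_tendsto[OF n])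
  then have "((\<lambda>s. M * N (x t - x s)) \<longlongrightarrow> M * 0) (at_right t)" using isn_0[OF n] by (intro tendsto_intros) simp
  then have ev2: "eventually (\<lambda>s. M * N (x t - x s) < e / 3) (at_right t)"
    using e by (intro order_tendstoD(2)) auto
  have "((\<lambda>s. x s - p) \<longlongrightarrow> x t - p) (at_right t)" using xcont by (intro tendsto_intros)
  then have "((\<lambda>s. N (x s - p)) \<longlongrightarrow> N (x t - p)) (at_right t)" by (rule isn_tendsto[OF n])
  then have "((\<lambda>s. c * (N (x s - p) - N (x t - p))) \<longlongrightarrow> c * (N (x t - p) - N (x t - p))) (at_right t)"
    by (intro tendsto_intros)
  then have ev3: "eventually (\<lambda>s. c * (N (x s - p) - N (x t - p)) < e / 3) (at_right t)"
    using e by (intro order_tendstoD(2)) auto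
  show ?thesis using ev1 ev2 ev3 eventually_at_right_less[of t]
  proof eventually_elim
    case (elim s)
    define h where "h = s - t"
    have h: "h > 0" using elim(4) h_def by simp
    define r where "r = x s - x t - h *\<^sub>R v"
    have Nr: "N r \<le> e / 3 * h"
    proof -
      have "N r \<le> K * norm r" using K by blast
      also have "\<dots> \<le> K * (e / (3 * K) * h)" using elim(1) K(1) unfolding r_def h_def
        by (intro mult_left_mono) auto
      also have "\<dots> = e / 3 * h" using K(1) by simp
      finally show ?thesis .
    qed
    have be: "(1 - h * c) * N (x s - p) \<le> N ((x s - p) - h *\<^sub>R (F (x s) - F p))"
      using wp_beuler[OF n wp, of h "x s - p" "F (x s) - F p" c] h os elim(4) by auto
    have id: "(x s - p) - h *\<^sub>R (F (x s) - F p) = ((x t - p) + r) + (h *\<^sub>R (v - F (x s)) + h *\<^sub>R F p)"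
      unfolding r_def by (simp add: algebra_simps)
    have "N ((x s - p) - h *\<^sub>R (F (x s) - F p)) \<le> N ((x t - p) + r) + N (h *\<^sub>R (v - F (x s)) + h *\<^sub>R F p)"
      unfolding id by (rule isn_tri[OF n])
    also have "\<dots> \<le> (N (x t - p) + N r) + (N (h *\<^sub>R (v - F (x s))) + N (h *\<^sub>R F p))"
      by (intro add_mono isn_tri[OF n])
    also have "\<dots> = N (x t - p) + N r + h * N (v - F (x s)) + h * N (F p)"
      using h by (simp add: isn_scale[OF n])
    also have "\<dots> \<le> N (x t - p) + e / 3 * h + h * (Bv + M * N (x t - x s)) + h * N (F p)"
      using Nr lip elim(4) h by (intro add_mono mult_left_mono) auto
    finally have A: "(1 - h * c) * N (x s - p) \<le> N (x t - p) + e / 3 * h + h * (Bv + M * N (x t - x s)) + h * N (F p)"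
      using be by linarith
    have B: "h * (M * N (x t - x s)) \<le> h * (e / 3)" using elim(2) h by simp
    have C: "h * (c * (N (x s - p) - N (x t - p))) \<le> h * (e / 3)" using elim(3) h by (intro mult_left_mono) auto
    have "N (x s - p) \<le> N (x t - p) + h * (c * N (x t - p) + Bv + N (F p) + e)"
      using A B C by (simp add: algebra_simps)
    then show ?case unfolding h_def .
  qed
qed




lemma floor_interval:
  fixes T t :: real
  assumes "T > 0" "real k * T \<le> t" "t < real (Suc k) * T"
  shows "nat \<lfloor>t / T\<rfloor> = k"
proof -
  have "real k \<le> t / T" using assms by (simp add: pos_le_divide_eq)
  moreover have "t / T < real k + 1" using assms by (simp add: pos_divide_less_eq algebra_simps)
  ultimately have "\<lfloor>t / T\<rfloor> = int k" by (simp add: floor_eq_iff)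
  then show ?thesis by simp
qed

lemma phi_mono:
  assumes "0 \<le> s" "s \<le> s'"
  shows "phi l s \<le> phi l s'"
proof -
  consider "l = 0" | "l > 0" | "l < 0" by linarith
  then show ?thesis
  proof cases
    case 2 then have "exp (l * s) \<le> exp (l * s')" using assms by (simp add: mult_left_mono)
    then show ?thesis using 2 by (simp add: phi_def divide_right_mono)
  next
    case 3 then have "exp (l * s') \<le> exp (l * s)" using assms by (simp add: mult_left_mono_neg)
    then show ?thesis using 3 by (simp add: phi_def divide_simps)
  qed (use assms in \<open>simp add: phi_def\<close>)
qed

lemma weights:
  fixes a11 a12 a21 a22 :: real
  assumes "a11 \<ge> 0" "a12 \<ge> 0" "a21 \<ge> 0" "a22 \<ge> 0" "a11 < 1" "a22 < 1"
    "a12 * a21 < (1 - a11) * (1 - a22)"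
  shows "\<exists>w r. w > 0 \<and> 0 < r \<and> r < 1 \<and> a11 + w * a21 \<le> r \<and> a12 + w * a22 \<le> r * w"
proof -
  define D where "D = (1 - a11) * (1 - a22) - a12 * a21"
  have D: "D > 0" using assms(7) D_def by simp
  define d where "d = D / (2 * (a21 + 1))"
  have d: "d > 0" using D assms(3) d_def by simp
  have dD: "d * a21 < D"
  proof -
    have "d * a21 = D * (a21 / (2 * (a21 + 1)))" unfolding d_def by simp
    also have "a21 / (2 * (a21 + 1)) < 1" using assms(3) by (simp add: divide_simps)
    then have "D * (a21 / (2 * (a21 + 1))) < D * 1" using D by (intro mult_strict_left_mono) auto
    finally show ?thesis by simp
  qed
  define w where "w = (a12 + d) / (1 - a22)"
  have w: "w > 0" using assms d w_def by simp
  have w1: "w * (1 - a22) = a12 + d" using assms(6) w_def by simp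
  have e1: "a12 + w * a22 = w - d" using w1 by (simp add: algebra_simps)
  have "(a12 + d) * a21 < (1 - a11) * (1 - a22)" using dD D_def by (simp add: algebra_simps)
  moreover have "w * a21 * (1 - a22) = (w * (1 - a22)) * a21" by (simp only: mult_ac)
  moreover have "(w * (1 - a22)) * a21 = (a12 + d) * a21" by (simp only: w1)
  ultimately have "w * a21 * (1 - a22) < (1 - a11) * (1 - a22)" by linarith
  then have "w * a21 < 1 - a11" using assms(6) by simp
  then have e2: "a11 + w * a21 < 1" by simp
  have e3: "(w - d) / w < 1" using w d by simp
  define r where "r = max (1/2) (max (a11 + w * a21) ((w - d) / w))"
  have "r < 1" using e2 e3 r_def by simp
  moreover have "r > 0" using r_def by simp
  moreover have "a11 + w * a21 \<le> r" using r_def by simp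
  moreover have "a12 + w * a22 \<le> r * w"
  proof -
    have "(w - d) / w \<le> r" using r_def by simp
    then have "(w - d) / w * w \<le> r * w" using w by (intro mult_right_mono) auto
    then show ?thesis using e1 w by simp
  qed
  ultimately show ?thesis using w by blast
qed

lemma seq_decay:
  fixes X e :: "nat \<Rightarrow> real"
  assumes "\<And>k. X k \<ge> 0" "\<And>k. e k \<ge> 0" "w > 0"
    "\<And>k. X (Suc k) \<le> a11 * X k + a12 * e k" "\<And>k. e (Suc k) \<le> a21 * X k + a22 * e k"
    "a11 + w * a21 \<le> r" "a12 + w * a22 \<le> r * w" "r \<ge> 0"
  shows "X k + w * e k \<le> r ^ k * (X 0 + w * e 0)"
proof (induction k)
  case 0 then show ?case by simp
next
  case (Suc k)
  have "X (Suc k) + w * e (Suc k) \<le> a11 * X k + a12 * e k + w * (a21 * X k + a22 * e k)"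
    using assms(4)[of k] assms(5)[of k] assms(3) by (intro add_mono mult_left_mono) auto
  also have "\<dots> = (a11 + w * a21) * X k + (a12 + w * a22) * e k" by (simp add: algebra_simps)
  also have "\<dots> \<le> r * X k + (r * w) * e k"
    using assms(1,2,6,7) by (intro add_mono mult_right_mono) auto
  also have "\<dots> = r * (X k + w * e k)" by (simp add: algebra_simps)
  also have "\<dots> \<le> r * (r ^ k * (X 0 + w * e 0))"
    by (rule mult_left_mono[OF Suc.IH assms(8)])
  finally show ?case by simp
qed

lemma pow_exp_bound:
  fixes r T t :: real
  assumes "0 < r" "r < 1" "T > 0" "t \<ge> 0" "real k * T \<le> t" "t < real (Suc k) * T"
  shows "r ^ k \<le> (1 / r) * exp (- (- ln r / T) * t)"
proof -
  have lr: "ln r < 0" using assms by simp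
  have "t / T - 1 < real k" using assms by (simp add: pos_divide_less_eq algebra_simps)
  then have "real k * ln r \<le> (t / T - 1) * ln r" using lr by (intro mult_right_mono_neg) auto
  then have "exp (real k * ln r) \<le> exp ((t / T - 1) * ln r)" by simp
  moreover have "r ^ k = exp (real k * ln r)" using assms(1) by (simp add: exp_of_nat_mult)
  moreover have "exp ((t / T - 1) * ln r) = (1 / r) * exp (- (- ln r / T) * t)"
  proof -
    have "(t / T - 1) * ln r = - (- ln r / T) * t + (- ln r)" using assms(3) by (simp add: field_simps)
    then have "exp ((t / T - 1) * ln r) = exp (- (- ln r / T) * t + (- ln r))" by simp
    also have "\<dots> = exp (- (- ln r / T) * t) * exp (- ln r)" by (rule exp_add)
    also have "exp (- ln r) = 1 / r" using assms(1) by (simp add: exp_minus inverse_eq_divide)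
    finally show ?thesis by simp
  qed
  ultimately show ?thesis by simp
qed




lemma isn_tri3: "is_norm N \<Longrightarrow> N (a - c) \<le> N (a - b) + N (b - c)"
  using isn_tri[of N "a - b" "b - c"] by simp

context
  fixes Nx :: "'x::euclidean_space \<Rightarrow> real" and Nz :: "'z::real_normed_vector \<Rightarrow> real"
    and WP :: "'x \<Rightarrow> 'x \<Rightarrow> real" and X :: "'x set" and Z :: "'z set"
    and f :: "'x \<Rightarrow> 'z \<Rightarrow> 'x" and G :: "'x \<Rightarrow> 'z \<Rightarrow> 'z" and zs :: "'x \<Rightarrow> 'z"
    and Lx L g l \<xi> \<zeta> T :: real and n :: nat
  assumes nx: "is_norm Nx" and nz: "is_norm Nz" and wp: "compatible_weak_pairing Nx WP"
    and X0: "0 \<in> X"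
    and fx: "\<forall>x1\<in>X. \<forall>x2\<in>X. \<forall>z\<in>Z. Nx (f x1 z - f x2 z) \<le> Lx * Nx (x1 - x2)"
    and fz: "\<forall>x\<in>X. \<forall>z1\<in>Z. \<forall>z2\<in>Z. Nx (f x z1 - f x z2) \<le> L * Nz (z1 - z2)"
    and Gn: "\<forall>x\<in>X. \<forall>z1\<in>Z. \<forall>z2\<in>Z. Nz ((G x ^^ n) z1 - (G x ^^ n) z2) \<le> l ^ n * Nz (z1 - z2)"
    and zsZ: "\<forall>x\<in>X. zs x \<in> Z" and zsfix: "\<forall>x\<in>X. (G x ^^ n) (zs x) = zs x"
    and zsL: "\<forall>a\<in>X. \<forall>b\<in>X. Nz (zs a - zs b) \<le> g * Nx (a - b)"
    and zs0: "zs 0 = 0" and f0: "f 0 0 = 0"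
    and osf: "\<forall>x1\<in>X. \<forall>x2\<in>X. \<forall>z\<in>Z. x1 \<noteq> x2 \<longrightarrow> WP (f x1 z - f x2 z) (x1 - x2) \<le> \<xi> * (Nx (x1 - x2))\<^sup>2"
    and osF: "\<forall>x1\<in>X. \<forall>x2\<in>X. x1 \<noteq> x2 \<longrightarrow> WP (f x1 (zs x1) - f x2 (zs x2)) (x1 - x2) \<le> - \<zeta> * (Nx (x1 - x2))\<^sup>2"
    and Lx0: "Lx \<ge> 0" and L0: "L > 0" and g0: "g > 0" and l0: "0 \<le> l" and l1: "l < 1"
    and zeta0: "\<zeta> > 0" and T0: "T > 0"
begin

lemma Fstar_lip:
  assumes "a \<in> X" "b \<in> X"
  shows "Nx (f a (zs a) - f b (zs b)) \<le> (Lx + L * g) * Nx (a - b)"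
proof -
  have "Nx (f a (zs a) - f b (zs b)) \<le> Nx (f a (zs a) - f b (zs a)) + Nx (f b (zs a) - f b (zs b))"
    by (rule isn_tri3[OF nx])
  also have "\<dots> \<le> Lx * Nx (a - b) + L * Nz (zs a - zs b)"
    using fx fz assms zsZ by (intro add_mono) auto
  also have "\<dots> \<le> Lx * Nx (a - b) + L * (g * Nx (a - b))"
    using zsL assms L0 Lx0 by (intro add_mono mult_left_mono) auto
  finally show ?thesis by (simp add: algebra_simps)
qed

lemma interval_step:
  fixes k :: nat and x :: "real \<Rightarrow> 'x" and z :: "real \<Rightarrow> 'z" and zk :: "nat \<Rightarrow> 'z"
  assumes sol: "is_solution f G n T x z" and inv: "\<forall>t\<ge>0. x t \<in> X \<and> z t \<in> Z"
    and zk: "\<forall>t\<ge>0. z t = zk (nat \<lfloor>t / T\<rfloor>)"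
    and zk_suc: "\<forall>k. zk (Suc k) = (G (x (real (Suc k) * T)) ^^ n) (zk k)"
  defines "a \<equiv> real k * T" and "b \<equiv> real (Suc k) * T"
  defines "Xa \<equiv> Nx (x a)" and "ea \<equiv> Nz (zk k - zs (x a))"
  defines "Bk \<equiv> L * ea + (Lx + L * g) * Xa"
  defines "Fk \<equiv> L * ea + L * g * (phi \<xi> T * Bk)"
  shows "Nx (x b) \<le> exp (- \<zeta> * T) * Xa + phi (- \<zeta>) T * Fk"
    and "Nz (zk (Suc k) - zs (x b)) \<le> l ^ n * (ea + g * (phi \<xi> T * Bk))"
    and "\<forall>t. a \<le> t \<and> t < b \<longrightarrow> Nx (x t) + Nz (z t) \<le> Xa + phi (- \<zeta>) T * Fk + ea + g * Xa"
proof -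
  have a0: "a \<ge> 0" unfolding a_def using T0 by simp
  have ab: "b = a + T" unfolding a_def b_def by (simp add: algebra_simps)
  have cont: "continuous_on {0..} x" and der: "\<forall>t\<ge>0. (x has_vector_derivative f (x t) (z t)) (at t within {t..})"
    using sol unfolding is_solution_def by auto
  have xX: "\<And>t. t \<ge> 0 \<Longrightarrow> x t \<in> X" using inv by auto
  have zka: "z a = zk k" using zk a0 floor_interval[OF T0, of k a] T0 unfolding a_def by auto
  have zkZ: "zk k \<in> Z" using inv a0 zka by force
  have zt: "\<And>t. a \<le> t \<Longrightarrow> t < b \<Longrightarrow> z t = zk k"
    using zk floor_interval[OF T0, of k] a0 unfolding a_def b_def by auto
  have xaX: "x a \<in> X" using xX a0 .
  have xright: "\<And>t. t \<ge> 0 \<Longrightarrow> (x \<longlongrightarrow> x t) (at_right t)"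
  proof -
    fix t :: real assume t: "t \<ge> 0"
    have "(x \<longlongrightarrow> x t) (at t within {0..})" using cont t by (simp add: continuous_on_def)
    then show "(x \<longlongrightarrow> x t) (at_right t)" by (rule tendsto_within_subset) (use t in auto)
  qed
  have Xa0: "Xa \<ge> 0" unfolding Xa_def using isn_nonneg[OF nx] .
  have ea0: "ea \<ge> 0" unfolding ea_def using isn_nonneg[OF nz] .
  have phiT0: "phi \<xi> T \<ge> 0" using T0 by (intro phi_nonneg) simp
  have Bk0: "Bk \<ge> 0" unfolding Bk_def using L0 Lx0 g0 Xa0 ea0 by simp
  have fxa: "Nx (f (x a) (zk k)) \<le> Bk"
  proof -
    have "Nx (f (x a) (zk k)) = Nx (f (x a) (zk k) - f 0 (zs 0))" using f0 zs0 by simp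
    also have "\<dots> \<le> Nx (f (x a) (zk k) - f (x a) (zs (x a))) + Nx (f (x a) (zs (x a)) - f 0 (zs 0))"
      by (rule isn_tri3[OF nx])
    also have "\<dots> \<le> L * ea + (Lx + L * g) * Nx (x a - 0)"
      unfolding ea_def using fz xaX zkZ zsZ Fstar_lip[OF xaX X0] by (intro add_mono) auto
    finally show ?thesis unfolding Bk_def Xa_def by simp
  qed
  have devA: "\<forall>t\<in>{a..b}. Nx (x t - x a) \<le> exp (\<xi> * (t - a)) * Nx (x a - x a) + Bk * phi \<xi> (t - a)"
  proof (rule lin_compare)
    have "continuous_on {a..b} x" by (rule continuous_on_subset[OF cont]) (use a0 in auto)
    then have "continuous_on {a..b} (\<lambda>t. x t - x a)" by (intro continuous_intros)
    then show "continuous_on {a..b} (\<lambda>t. Nx (x t - x a))" by (rule isn_continuous_on[OF nx])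
  next
    fix t e :: real assume t: "a \<le> t" "t < b" and e: "e > 0"
    have t0: "t \<ge> 0" using a0 t by simp
    have d: "(x has_vector_derivative f (x t) (zk k)) (at t within {t..})"
      using der t0 zt[OF t] by auto
    have ev: "eventually (\<lambda>s. Nx (x s - x a) \<le> Nx (x t - x a) + (s - t) * (\<xi> * Nx (x t - x a) + 0 + Nx (f (x a) (zk k)) + e)) (at_right t)"
    proof (rule dini_norm[OF nx wp d xright[OF t0], where F = "\<lambda>y. f y (zk k)"])
      show "\<forall>s>t. x s - x a \<noteq> 0 \<longrightarrow> WP (f (x s) (zk k) - f (x a) (zk k)) (x s - x a) \<le> \<xi> * (Nx (x s - x a))\<^sup>2"
        using osf xX xaX zkZ t0 by auto
      show "\<forall>s>t. Nx (f (x t) (zk k) - f (x s) (zk k)) \<le> 0 + Lx * Nx (x t - x s)"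
        using fx xX zkZ t0 by auto
    qed (rule e)
    then show "eventually (\<lambda>s. Nx (x s - x a) \<le> Nx (x t - x a) + (s - t) * (\<xi> * Nx (x t - x a) + Bk + e)) (at_right t)"
      using eventually_at_right_less[of t]
    proof eventually_elim
      case (elim s)
      have "(s - t) * (\<xi> * Nx (x t - x a) + 0 + Nx (f (x a) (zk k)) + e) \<le> (s - t) * (\<xi> * Nx (x t - x a) + Bk + e)"
        using fxa elim(2) by (intro mult_left_mono) auto
      then show ?case using elim(1) by linarith
    qed
  qed
  have dev: "\<forall>t\<in>{a..b}. Nx (x t - x a) \<le> Bk * phi \<xi> T"
  proof
    fix t assume t: "t \<in> {a..b}"
    have "Nx (x t - x a) \<le> Bk * phi \<xi> (t - a)" using devA t isn_0[OF nx] by simp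
    also have "\<dots> \<le> Bk * phi \<xi> T" using t ab Bk0 by (intro mult_left_mono phi_mono) auto
    finally show "Nx (x t - x a) \<le> Bk * phi \<xi> T" .
  qed
  have Fk0: "Fk \<ge> 0" unfolding Fk_def using L0 g0 ea0 Bk0 phiT0 by simp
  have normB: "\<forall>t\<in>{a..b}. Nx (x t) \<le> exp (- \<zeta> * (t - a)) * Nx (x a) + Fk * phi (- \<zeta>) (t - a)"
  proof (rule lin_compare)
    have "continuous_on {a..b} x" by (rule continuous_on_subset[OF cont]) (use a0 in auto)
    then show "continuous_on {a..b} (\<lambda>t. Nx (x t))" by (rule isn_continuous_on[OF nx])
  next
    fix t e :: real assume t: "a \<le> t" "t < b" and e: "e > 0"
    have t0: "t \<ge> 0" using a0 t by simp
    have xtX: "x t \<in> X" using xX t0 .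
    have d: "(x has_vector_derivative f (x t) (zk k)) (at t within {t..})"
      using der t0 zt[OF t] by auto
    have ev: "eventually (\<lambda>s. Nx (x s - 0) \<le> Nx (x t - 0) + (s - t) * (- \<zeta> * Nx (x t - 0) + L * Nz (zk k - zs (x t)) + Nx (f 0 (zs 0)) + e)) (at_right t)"
    proof (rule dini_norm[OF nx wp d xright[OF t0], where F = "\<lambda>y. f y (zs y)" and M = "Lx + L * g"])
      show "\<forall>s>t. x s - 0 \<noteq> 0 \<longrightarrow> WP (f (x s) (zs (x s)) - f 0 (zs 0)) (x s - 0) \<le> - \<zeta> * (Nx (x s - 0))\<^sup>2"
      proof (intro allI impI)
        fix s assume s: "s > t" "x s - 0 \<noteq> 0"
        have xsX: "x s \<in> X" using xX t0 s by simp
        have "x s \<noteq> 0" using s by simp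
        then show "WP (f (x s) (zs (x s)) - f 0 (zs 0)) (x s - 0) \<le> - \<zeta> * (Nx (x s - 0))\<^sup>2"
          using osF xsX X0 by blast
      qed
      show "\<forall>s>t. Nx (f (x t) (zk k) - f (x s) (zs (x s))) \<le> L * Nz (zk k - zs (x t)) + (Lx + L * g) * Nx (x t - x s)"
      proof (intro allI impI)
        fix s assume s: "s > t"
        have xsX: "x s \<in> X" using xX t0 s by simp
        have "Nx (f (x t) (zk k) - f (x s) (zs (x s))) \<le> Nx (f (x t) (zk k) - f (x t) (zs (x t))) + Nx (f (x t) (zs (x t)) - f (x s) (zs (x s)))"
          by (rule isn_tri3[OF nx])
        also have "\<dots> \<le> L * Nz (zk k - zs (x t)) + (Lx + L * g) * Nx (x t - x s)"
          using fz xtX zkZ zsZ Fstar_lip[OF xtX xsX] by (intro add_mono) auto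
        finally show "Nx (f (x t) (zk k) - f (x s) (zs (x s))) \<le> L * Nz (zk k - zs (x t)) + (Lx + L * g) * Nx (x t - x s)" .
      qed
    qed (rule e)
    have bv: "L * Nz (zk k - zs (x t)) \<le> Fk"
    proof -
      have "Nz (zk k - zs (x t)) \<le> Nz (zk k - zs (x a)) + Nz (zs (x a) - zs (x t))" by (rule isn_tri3[OF nz])
      also have "\<dots> \<le> ea + g * Nx (x a - x t)" unfolding ea_def using zsL xaX xtX by (intro add_mono) auto
      also have "Nx (x a - x t) = Nx (x t - x a)" by (rule isn_commute[OF nx])
      also have "ea + g * Nx (x t - x a) \<le> ea + g * (phi \<xi> T * Bk)"
        using dev t g0 by (intro add_mono mult_left_mono) (auto simp: mult.commute)
      finally have "Nz (zk k - zs (x t)) \<le> ea + g * (phi \<xi> T * Bk)" .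
      then have "L * Nz (zk k - zs (x t)) \<le> L * (ea + g * (phi \<xi> T * Bk))" using L0 by simp
      then show ?thesis unfolding Fk_def by (simp add: algebra_simps)
    qed
    show "eventually (\<lambda>s. Nx (x s) \<le> Nx (x t) + (s - t) * (- \<zeta> * Nx (x t) + Fk + e)) (at_right t)"
      using ev eventually_at_right_less[of t]
    proof eventually_elim
      case (elim s)
      have "(s - t) * (- \<zeta> * Nx (x t - 0) + L * Nz (zk k - zs (x t)) + Nx (f 0 (zs 0)) + e) \<le> (s - t) * (- \<zeta> * Nx (x t) + Fk + e)"
        using bv elim(2) f0 zs0 isn_0[OF nx] by (intro mult_left_mono) auto
      then show ?case using elim(1) by simp
    qed
  qed
  have cpos: "phi (- \<zeta>) T \<ge> 0" using T0 by (intro phi_nonneg) simp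
  show "Nx (x b) \<le> exp (- \<zeta> * T) * Xa + phi (- \<zeta>) T * Fk"
  proof -
    have "b \<in> {a..b}" using ab T0 by simp
    then have "Nx (x b) \<le> exp (- \<zeta> * (b - a)) * Nx (x a) + Fk * phi (- \<zeta>) (b - a)" using normB by blast
    then show ?thesis using ab unfolding Xa_def by (simp add: mult.commute)
  qed
  show "Nz (zk (Suc k) - zs (x b)) \<le> l ^ n * (ea + g * (phi \<xi> T * Bk))"
  proof -
    have b0: "b \<ge> 0" using ab a0 T0 by simp
    have xbX: "x b \<in> X" using xX b0 .
    have "Nz (zk (Suc k) - zs (x b)) = Nz ((G (x b) ^^ n) (zk k) - (G (x b) ^^ n) (zs (x b)))"
      using zk_suc zsfix xbX unfolding b_def by simp
    also have "\<dots> \<le> l ^ n * Nz (zk k - zs (x b))" using Gn xbX zkZ zsZ by auto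
    also have "Nz (zk k - zs (x b)) \<le> ea + g * (phi \<xi> T * Bk)"
    proof -
      have "Nz (zk k - zs (x b)) \<le> Nz (zk k - zs (x a)) + Nz (zs (x a) - zs (x b))" by (rule isn_tri3[OF nz])
      also have "\<dots> \<le> ea + g * Nx (x a - x b)" unfolding ea_def using zsL xaX xbX by (intro add_mono) auto
      also have "Nx (x a - x b) = Nx (x b - x a)" by (rule isn_commute[OF nx])
      also have "ea + g * Nx (x b - x a) \<le> ea + g * (phi \<xi> T * Bk)"
        using dev ab T0 g0 by (intro add_mono mult_left_mono) (auto simp: mult.commute)
      finally show ?thesis .
    qed
    then have "l ^ n * Nz (zk k - zs (x b)) \<le> l ^ n * (ea + g * (phi \<xi> T * Bk))"
      using l0 by (intro mult_left_mono) auto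
    finally show ?thesis .
  qed
  show "\<forall>t. a \<le> t \<and> t < b \<longrightarrow> Nx (x t) + Nz (z t) \<le> Xa + phi (- \<zeta>) T * Fk + ea + g * Xa"
  proof (intro allI impI)
    fix t assume t: "a \<le> t \<and> t < b"
    have "Nx (x t) \<le> exp (- \<zeta> * (t - a)) * Nx (x a) + Fk * phi (- \<zeta>) (t - a)" using normB t by auto
    also have "exp (- \<zeta> * (t - a)) * Nx (x a) \<le> 1 * Nx (x a)"
      using t zeta0 isn_nonneg[OF nx] by (intro mult_right_mono) auto
    also have "Fk * phi (- \<zeta>) (t - a) \<le> Fk * phi (- \<zeta>) T"
      using t ab Fk0 by (intro mult_left_mono phi_mono) auto
    finally have A: "Nx (x t) \<le> Xa + phi (- \<zeta>) T * Fk" unfolding Xa_def by (simp add: mult.commute)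
    have "Nz (z t) = Nz (zk k)" using zt t by simp
    also have "\<dots> = Nz (zk k - zs 0)" using zs0 by simp
    also have "\<dots> \<le> Nz (zk k - zs (x a)) + Nz (zs (x a) - zs 0)" by (rule isn_tri3[OF nz])
    also have "\<dots> \<le> ea + g * Nx (x a - 0)" unfolding ea_def using zsL[rule_format, OF xaX X0] by simp
    finally have B: "Nz (z t) \<le> ea + g * Xa" unfolding Xa_def by simp
    show "Nx (x t) + Nz (z t) \<le> Xa + phi (- \<zeta>) T * Fk + ea + g * Xa" using A B by simp
  qed
qed


lemma sol_estimate:
  assumes Tc: "phi \<xi> T * (l ^ n * g * L + L * g * (Lx + L * g) / \<zeta>) < 1 - l ^ n"
  shows "\<exists>K \<alpha>. K > 0 \<and> \<alpha> > 0 \<and> (\<forall>x z. is_solution f G n T x z \<and> (\<forall>t\<ge>0. x t \<in> X \<and> z t \<in> Z) \<longrightarrow>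
           (\<forall>t\<ge>0. Nx (x t) + Nz (z t) \<le> K * exp (- \<alpha> * t) * (Nx (x 0) + Nz (z 0))))"
proof -
  define p where "p = phi \<xi> T"
  define c where "c = phi (- \<zeta>) T"
  define M where "M = Lx + L * g"
  define E where "E = exp (- \<zeta> * T)"
  define q where "q = l ^ n"
  define C1 where "C1 = L * g * M"
  define C2 where "C2 = q * g * L"
  define a11 where "a11 = E + c * (L * g * p * M)"
  define a12 where "a12 = c * (L * (1 + g * L * p))"
  define a21 where "a21 = q * (g * p * M)"
  define a22 where "a22 = q * (1 + g * p * L)"
  have p0: "p \<ge> 0" unfolding p_def using T0 by (intro phi_nonneg) simp
  have E1: "E < 1" unfolding E_def using zeta0 T0 by simp
  have E0: "E > 0" unfolding E_def by simp
  have Ec: "E = 1 - \<zeta> * c" unfolding E_def c_def phi_def using zeta0 by simp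
  have c0: "c > 0" using Ec E1 zeta0 by (smt (verit) mult_pos_pos mult_le_0_iff)
  have q0: "q \<ge> 0" unfolding q_def using l0 by simp
  have M0: "M \<ge> 0" unfolding M_def using Lx0 L0 g0 by simp
  have C10: "C1 \<ge> 0" unfolding C1_def using L0 g0 M0 by simp
  have C20: "C2 \<ge> 0" unfolding C2_def using L0 g0 q0 by simp
  have Tc': "p * (C2 + C1 / \<zeta>) < 1 - q" using Tc unfolding p_def C1_def C2_def q_def M_def by simp
  have pC2: "p * C2 \<ge> 0" and pC1: "p * (C1 / \<zeta>) \<ge> 0" using p0 C10 C20 zeta0 by simp_all
  have Tc2: "p * (\<zeta> * C2 + C1) < \<zeta> * (1 - q)"
  proof -
    have "\<zeta> * (p * (C2 + C1 / \<zeta>)) < \<zeta> * (1 - q)" using Tc' zeta0 by simp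
    moreover have "\<zeta> * (p * (C2 + C1 / \<zeta>)) = p * (\<zeta> * C2 + C1)" using zeta0 by (simp add: field_simps)
    ultimately show ?thesis by simp
  qed
  have q1: "q < 1" using Tc' pC2 pC1 by (simp add: distrib_left)
  have a11_0: "a11 \<ge> 0" unfolding a11_def using E0 c0 L0 g0 p0 M0 by simp
  have a12_0: "a12 \<ge> 0" unfolding a12_def using c0 L0 g0 p0 by simp
  have a21_0: "a21 \<ge> 0" unfolding a21_def using q0 g0 p0 M0 by simp
  have a22_0: "a22 \<ge> 0" unfolding a22_def using q0 g0 p0 L0 by simp
  have pC1z: "p * C1 < \<zeta>"
  proof -
    have "p * (C1 / \<zeta>) < 1" using Tc' pC2 q0 by (simp add: distrib_left)
    then show ?thesis using zeta0 by (simp add: field_simps)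
  qed
  have a11_1: "a11 < 1"
  proof -
    have "a11 = 1 - c * (\<zeta> - p * C1)" unfolding a11_def Ec C1_def by (simp add: algebra_simps)
    moreover have "c * (\<zeta> - p * C1) > 0" using c0 pC1z by simp
    ultimately show ?thesis by simp
  qed
  have a22_1: "a22 < 1"
  proof -
    have "a22 = q + p * C2" unfolding a22_def C2_def by (simp add: algebra_simps)
    moreover have "p * C2 < 1 - q" using Tc' pC1 by (simp add: distrib_left)
    ultimately show ?thesis by simp
  qed
  have schur: "a12 * a21 < (1 - a11) * (1 - a22)"
  proof -
    have "(1 - a11) * (1 - a22) - a12 * a21 = c * (\<zeta> * (1 - q) - p * (\<zeta> * C2 + C1))"
      unfolding a11_def a12_def a21_def a22_def Ec C1_def C2_def by (simp add: algebra_simps)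
    moreover have "c * (\<zeta> * (1 - q) - p * (\<zeta> * C2 + C1)) > 0" using c0 Tc2 by simp
    ultimately show ?thesis by simp
  qed
  obtain w r where wr: "w > 0" "0 < r" "r < 1" "a11 + w * a21 \<le> r" "a12 + w * a22 \<le> r * w"
    using weights[OF a11_0 a12_0 a21_0 a22_0 a11_1 a22_1 schur] by blast
  define Kc where "Kc = max (1 + c * (L * g * p * M) + g) ((c * (L * (1 + g * L * p)) + 1) / w)"
  define Kv where "Kv = max (1 + w * g) w"
  define K where "K = Kc * (1 / r) * Kv"
  define \<alpha> where "\<alpha> = - ln r / T"
  have "0 \<le> c * (L * g * p * M)" using c0 L0 g0 p0 M0 by simp
  then have "0 < 1 + c * (L * g * p * M) + g" using g0 by simp
  then have Kc0: "Kc > 0" unfolding Kc_def by (simp add: less_max_iff_disj)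
  have Kv0: "Kv > 0" unfolding Kv_def using wr by (simp add: less_max_iff_disj)
  have K0: "K > 0" unfolding K_def using Kc0 Kv0 wr by simp
  have "ln r < 0" using wr by simp
  then have \<alpha>0: "\<alpha> > 0" unfolding \<alpha>_def using T0 by (simp add: divide_neg_pos)
  have main: "\<forall>t\<ge>0. Nx (x t) + Nz (z t) \<le> K * exp (- \<alpha> * t) * (Nx (x 0) + Nz (z 0))"
    if sol: "is_solution f G n T x z" and inv: "\<forall>t\<ge>0. x t \<in> X \<and> z t \<in> Z" for x z
  proof -
    obtain zk where zk: "\<forall>t\<ge>0. z t = zk (nat \<lfloor>t / T\<rfloor>)"
      and zk_suc: "\<forall>k. zk (Suc k) = (G (x (real (Suc k) * T)) ^^ n) (zk k)"
      using sol unfolding is_solution_def by blast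
    define Xs where "Xs k = Nx (x (real k * T))" for k
    define es where "es k = Nz (zk k - zs (x (real k * T)))" for k
    note IS = interval_step[OF sol inv zk zk_suc]
    have Xs0: "\<And>k. Xs k \<ge> 0" unfolding Xs_def using isn_nonneg[OF nx] by simp
    have es0: "\<And>k. es k \<ge> 0" unfolding es_def using isn_nonneg[OF nz] by simp
    have rec1: "Xs (Suc k) \<le> a11 * Xs k + a12 * es k" for k
    proof -
      have "Xs (Suc k) \<le> E * Xs k + c * (L * es k + L * g * (p * (L * es k + M * Xs k)))"
        using IS(1)[of k] unfolding Xs_def es_def E_def c_def p_def M_def by simp
      also have "\<dots> = a11 * Xs k + a12 * es k" unfolding a11_def a12_def by (simp add: algebra_simps)
      finally show ?thesis .
    qed
    have rec2: "es (Suc k) \<le> a21 * Xs k + a22 * es k" for k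
    proof -
      have "es (Suc k) \<le> q * (es k + g * (p * (L * es k + M * Xs k)))"
        using IS(2)[of k] unfolding Xs_def es_def q_def p_def M_def by simp
      also have "\<dots> = a21 * Xs k + a22 * es k" unfolding a21_def a22_def by (simp add: algebra_simps)
      finally show ?thesis .
    qed
    have decay: "Xs k + w * es k \<le> r ^ k * (Xs 0 + w * es 0)" for k
      by (rule seq_decay[where X=Xs and e=es, OF Xs0 es0 wr(1) rec1 rec2 wr(4) wr(5)]) (use wr in simp)
    have V0: "Xs 0 + w * es 0 \<le> Kv * (Nx (x 0) + Nz (z 0))"
    proof -
      have z0: "z 0 = zk 0" using zk by simp
      have x0X: "x 0 \<in> X" using inv by simp
      have "es 0 = Nz (z 0 - zs (x 0))" unfolding es_def using z0 by simp
      also have "\<dots> \<le> Nz (z 0) + Nz (zs (x 0))" by (rule isn_tri_diff[OF nz])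
      also have "Nz (zs (x 0)) = Nz (zs (x 0) - zs 0)" using zs0 by simp
      also have "\<dots> \<le> g * Nx (x 0 - 0)" using zsL x0X X0 by blast
      finally have "es 0 \<le> Nz (z 0) + g * Nx (x 0)" by simp
      then have "Xs 0 + w * es 0 \<le> Nx (x 0) + w * (Nz (z 0) + g * Nx (x 0))"
        unfolding Xs_def using wr(1) by (simp add: mult_left_mono)
      also have "\<dots> = (1 + w * g) * Nx (x 0) + w * Nz (z 0)" by (simp add: algebra_simps)
      also have "\<dots> \<le> Kv * Nx (x 0) + Kv * Nz (z 0)" unfolding Kv_def
        using isn_nonneg[OF nx] isn_nonneg[OF nz] by (intro add_mono mult_right_mono) auto
      finally show ?thesis by (simp add: algebra_simps)
    qed
    show ?thesis
    proof (intro allI impI)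
      fix t :: real assume t: "t \<ge> 0"
      define k where "k = nat \<lfloor>t / T\<rfloor>"
      have tT: "t / T \<ge> 0" using t T0 by simp
      have k1: "real k * T \<le> t"
      proof -
        have "real k = of_int \<lfloor>t / T\<rfloor>" unfolding k_def using tT by simp
        then have "real k \<le> t / T" by simp
        then show ?thesis using T0 by (simp add: pos_le_divide_eq)
      qed
      have k2: "t < real (Suc k) * T"
      proof -
        have "real k = of_int \<lfloor>t / T\<rfloor>" unfolding k_def using tT by simp
        then have "t / T < real k + 1" by linarith
        then show ?thesis using T0 by (simp add: pos_divide_less_eq algebra_simps)
      qed
      have "Nx (x t) + Nz (z t) \<le> Xs k + c * (L * es k + L * g * (p * (L * es k + M * Xs k))) + es k + g * Xs k"
        using IS(3)[of k] k1 k2 unfolding Xs_def es_def c_def p_def M_def by simp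
      also have "\<dots> = (1 + c * (L * g * p * M) + g) * Xs k + (c * (L * (1 + g * L * p)) + 1) * es k"
        by (simp add: algebra_simps)
      also have "\<dots> \<le> Kc * Xs k + (Kc * w) * es k"
      proof (intro add_mono mult_right_mono)
        show "1 + c * (L * g * p * M) + g \<le> Kc" unfolding Kc_def by simp
        have "(c * (L * (1 + g * L * p)) + 1) / w \<le> Kc" unfolding Kc_def by simp
        then show "c * (L * (1 + g * L * p)) + 1 \<le> Kc * w" using wr(1) by (simp add: divide_le_eq)
      qed (use Xs0 es0 in auto)
      also have "\<dots> = Kc * (Xs k + w * es k)" by (simp add: algebra_simps)
      also have "\<dots> \<le> Kc * (r ^ k * (Xs 0 + w * es 0))" using Kc0 decay by (intro mult_left_mono) auto
      also have "\<dots> \<le> Kc * (((1 / r) * exp (- \<alpha> * t)) * (Kv * (Nx (x 0) + Nz (z 0))))"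
      proof (intro mult_left_mono mult_mono)
        show "r ^ k \<le> (1 / r) * exp (- \<alpha> * t)" unfolding \<alpha>_def
          using pow_exp_bound[OF wr(2) wr(3) T0 t k1 k2] by simp
      qed (use V0 Kc0 wr Xs0 es0 in \<open>auto intro: add_nonneg_nonneg\<close>)
      also have "\<dots> = K * exp (- \<alpha> * t) * (Nx (x 0) + Nz (z 0))" unfolding K_def by (simp add: field_simps)
      finally show "Nx (x t) + Nz (z t) \<le> K * exp (- \<alpha> * t) * (Nx (x 0) + Nz (z 0))" .
    qed
  qed
  show ?thesis using K0 \<alpha>0 main by blast
qed

end




lemma lip_from_sup:
  fixes S :: "ereal set"
  assumes "Sup S < \<infinity>" "ereal (a / b) \<in> S" "b > 0"
  shows "a \<le> real_of_ereal (Sup S) * b"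
proof -
  have "a / b \<le> real_of_ereal (Sup S)" by (rule ereal_Sup_bound[OF assms(1,2)])
  then show ?thesis using assms(3) by (simp add: divide_le_eq)
qed

lemma os_from_sup:
  fixes S :: "ereal set"
  assumes "Sup S \<le> ereal c" "ereal (a / b) \<in> S" "b > 0"
  shows "a \<le> c * b"
proof -
  have "a / b \<le> c" by (rule ereal_Sup_le[OF assms(1,2)])
  then show ?thesis using assms(3) by (simp add: divide_le_eq)
qed

lemma real_of_ereal_pos_lt: "0 < a \<Longrightarrow> a < \<infinity> \<Longrightarrow> 0 < real_of_ereal a"
  by (cases a) auto

lemma real_of_ereal_lt1: "a < 1 \<Longrightarrow> real_of_ereal a < 1"
  by (cases a) auto

lemma sqrt_sum_le: "0 \<le> a \<Longrightarrow> 0 \<le> b \<Longrightarrow> sqrt (a\<^sup>2 + b\<^sup>2) \<le> a + b"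
  by (rule real_sqrt_le_iff[THEN iffD2] | simp add: real_le_lsqrt power2_eq_square algebra_simps)+

lemma sum_le_sqrt: "0 \<le> a \<Longrightarrow> 0 \<le> b \<Longrightarrow> a + b \<le> sqrt 2 * sqrt (a\<^sup>2 + b\<^sup>2)"
proof -
  assume "0 \<le> a" "0 \<le> b"
  have "(a + b)\<^sup>2 \<le> 2 * (a\<^sup>2 + b\<^sup>2)"
    using sum_squares_ge_zero[of "a - b" 0] by (simp add: power2_eq_square algebra_simps)
  then have "a + b \<le> sqrt (2 * (a\<^sup>2 + b\<^sup>2))" by (rule real_le_rsqrt)
  then show ?thesis by (simp only: real_sqrt_mult)
qed

theorem corollary1:
  fixes Nx :: "real^'nx \<Rightarrow> real" and Nz :: "real^'nz \<Rightarrow> real"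
    and WP :: "real^'nx \<Rightarrow> real^'nx \<Rightarrow> real"
    and X :: "(real^'nx) set" and Z :: "(real^'nz) set"
    and f :: "real^'nx \<Rightarrow> real^'nz \<Rightarrow> real^'nx"
    and G :: "real^'nx \<Rightarrow> real^'nz \<Rightarrow> real^'nz"
    and \<xi> \<zeta> T :: real and n :: nat
  assumes normX: "is_norm Nx" and normZ: "is_norm Nz"
    and WP: "compatible_weak_pairing Nx WP"
    and convX: "convex X" and convZ: "convex Z"
    and zero_in: "0 \<in> X" "0 \<in> Z"
    and f_cont: "continuous_on (X \<times> Z) (\<lambda>(x, z). f x z)"
    and G_cont: "continuous_on (X \<times> Z) (\<lambda>(x, z). G x z)"
    and G_maps: "\<forall>x\<in>X. \<forall>z\<in>Z. G x z \<in> Z"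
    and f0: "f 0 0 = 0" and G0: "G 0 0 = 0"
    and fixpt: "\<forall>x\<in>X. \<exists>!z. z \<in> Z \<and> G x z = z"
    and A1: "Lip_x Nx Nx X Z f < \<infinity>"
    and A2: "0 < Lip_z Nz Nx X Z f" "Lip_z Nz Nx X Z f < \<infinity>"
            "0 < Lip_x Nx Nz X Z G" "Lip_x Nx Nz X Z G < \<infinity>"
    and A3: "Lip_z Nz Nz X Z G < 1"
    and xi: "osLip_x WP Nx X Z f \<le> ereal \<xi>"
    and zeta: "\<zeta> > 0" "osLip WP Nx X (\<lambda>x. f x (zstar G Z x)) \<le> ereal (- \<zeta>)"
    and n: "n > 0"
    and T: "0 < T"
           "ereal T < Tbound \<xi> \<zeta> (real_of_ereal (Lip_x Nx Nx X Z f)) (real_of_ereal (Lip_z Nz Nx X Z f))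
                       (real_of_ereal (Lip_x Nx Nz X Z G)) (real_of_ereal (Lip_z Nz Nz X Z G)) n"
  shows "\<exists>\<eta>1 \<eta>2 \<rho> \<alpha>. \<eta>1 > 0 \<and> \<eta>2 > 0 \<and> \<rho> > 0 \<and> \<alpha> > 0 \<and>
    (\<forall>X0 Z0. X0 \<subseteq> X \<and> Z0 \<subseteq> Z \<and>
       (\<forall>x z. is_solution f G n T x z \<and> x 0 \<in> X0 \<and> z 0 \<in> Z0
              \<longrightarrow> (\<forall>t\<ge>0. x t \<in> X \<and> z t \<in> Z))
     \<longrightarrow> (\<forall>x z. is_solution f G n T x z \<and> x 0 \<in> X0 \<and> z 0 \<in> Z0
              \<longrightarrow> (\<forall>t\<ge>0. sqrt (\<eta>1 * (Nx (x t))\<^sup>2 + \<eta>2 * (Nz (z t))\<^sup>2)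
                      \<le> \<rho> * exp (- \<alpha> * t) * sqrt (\<eta>1 * (Nx (x 0))\<^sup>2 + \<eta>2 * (Nz (z 0))\<^sup>2))))"
proof -
  define Lx where "Lx = real_of_ereal (Lip_x Nx Nx X Z f)"
  define L where "L = real_of_ereal (Lip_z Nz Nx X Z f)"
  define LG where "LG = real_of_ereal (Lip_x Nx Nz X Z G)"
  define l where "l = real_of_ereal (Lip_z Nz Nz X Z G)"
  define zs where "zs = zstar G Z"
  define g where "g = LG / (1 - l)"
  have nxn: "\<And>v. 0 \<le> Nx v" using isn_nonneg[OF normX] .
  have nzn: "\<And>v. 0 \<le> Nz v" using isn_nonneg[OF normZ] .
  have Lx0: "Lx \<ge> 0" unfolding Lx_def Lip_x_def
    by (rule ereal_Sup_nonneg) (auto simp: nxn)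
  have l0: "l \<ge> 0" unfolding l_def Lip_z_def
    by (rule ereal_Sup_nonneg) (auto simp: nzn)
  have L0: "L > 0" unfolding L_def using A2(1,2) by (rule real_of_ereal_pos_lt)
  have LG0: "LG > 0" unfolding LG_def using A2(3,4) by (rule real_of_ereal_pos_lt)
  have l1: "l < 1" unfolding l_def using A3 by (rule real_of_ereal_lt1)
  have g0: "g > 0" unfolding g_def using LG0 l1 by simp
  have fx: "\<forall>x1\<in>X. \<forall>x2\<in>X. \<forall>z\<in>Z. Nx (f x1 z - f x2 z) \<le> Lx * Nx (x1 - x2)"
  proof (intro ballI)
    fix x1 x2 z assume h: "x1 \<in> X" "x2 \<in> X" "z \<in> Z"
    show "Nx (f x1 z - f x2 z) \<le> Lx * Nx (x1 - x2)"
    proof (cases "x1 = x2")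
      case True then show ?thesis using isn_0[OF normX] isn_0[OF normZ] by simp
    next
      case False
      have "Nx (f x1 z - f x2 z) \<le> Lx * Nx (x1 - x2)" unfolding Lx_def Lip_x_def
        by (rule lip_from_sup[OF A1[unfolded Lip_x_def]]) (use h False isn_pos[OF normX] in auto)
      then show ?thesis .
    qed
  qed
  have fz: "\<forall>x\<in>X. \<forall>z1\<in>Z. \<forall>z2\<in>Z. Nx (f x z1 - f x z2) \<le> L * Nz (z1 - z2)"
  proof (intro ballI)
    fix x z1 z2 assume h: "x \<in> X" "z1 \<in> Z" "z2 \<in> Z"
    show "Nx (f x z1 - f x z2) \<le> L * Nz (z1 - z2)"
    proof (cases "z1 = z2")
      case True then show ?thesis using isn_0[OF normX] isn_0[OF normZ] by simp
    next
      case False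
      show ?thesis unfolding L_def Lip_z_def
        by (rule lip_from_sup[OF A2(2)[unfolded Lip_z_def]]) (use h False isn_pos[OF normZ] in auto)
    qed
  qed
  have Gx: "\<forall>x1\<in>X. \<forall>x2\<in>X. \<forall>z\<in>Z. Nz (G x1 z - G x2 z) \<le> LG * Nx (x1 - x2)"
  proof (intro ballI)
    fix x1 x2 z assume h: "x1 \<in> X" "x2 \<in> X" "z \<in> Z"
    show "Nz (G x1 z - G x2 z) \<le> LG * Nx (x1 - x2)"
    proof (cases "x1 = x2")
      case True then show ?thesis using isn_0[OF normX] isn_0[OF normZ] by simp
    next
      case False
      show ?thesis unfolding LG_def Lip_x_def
        by (rule lip_from_sup[OF A2(4)[unfolded Lip_x_def]]) (use h False isn_pos[OF normX] in auto)
    qed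
  qed
  have A3': "Lip_z Nz Nz X Z G < \<infinity>" using A3 by (metis ereal_less(1) less_ereal.simps(4) less_trans one_ereal_def)
  have Gz: "\<forall>x\<in>X. \<forall>z1\<in>Z. \<forall>z2\<in>Z. Nz (G x z1 - G x z2) \<le> l * Nz (z1 - z2)"
  proof (intro ballI)
    fix x z1 z2 assume h: "x \<in> X" "z1 \<in> Z" "z2 \<in> Z"
    show "Nz (G x z1 - G x z2) \<le> l * Nz (z1 - z2)"
    proof (cases "z1 = z2")
      case True then show ?thesis using isn_0[OF normX] isn_0[OF normZ] by simp
    next
      case False
      show ?thesis unfolding l_def Lip_z_def
        by (rule lip_from_sup[OF A3'[unfolded Lip_z_def]]) (use h False isn_pos[OF normZ] in auto)
    qed
  qed
  have zsX: "\<forall>x\<in>X. zs x \<in> Z \<and> G x (zs x) = zs x"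
  proof
    fix x assume "x \<in> X"
    then have "\<exists>!z. z \<in> Z \<and> G x z = z" using fixpt by blast
    then show "zs x \<in> Z \<and> G x (zs x) = zs x" unfolding zs_def zstar_def by (rule theI')
  qed
  have zsZ: "\<forall>x\<in>X. zs x \<in> Z" using zsX by blast
  have zs0: "zs 0 = 0"
  proof -
    have "\<exists>!z. z \<in> Z \<and> G 0 z = z" using fixpt zero_in by blast
    then show ?thesis unfolding zs_def zstar_def using zero_in G0 by (intro the1_equality) auto
  qed
  have Git: "\<forall>z\<in>Z. (G x ^^ m) z \<in> Z" if "x \<in> X" for x m
    by (induction m) (use that G_maps in auto)
  have Gn: "\<forall>x\<in>X. \<forall>z1\<in>Z. \<forall>z2\<in>Z. Nz ((G x ^^ n) z1 - (G x ^^ n) z2) \<le> l ^ n * Nz (z1 - z2)"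
  proof (intro ballI)
    fix x z1 z2 assume h: "x \<in> X" "z1 \<in> Z" "z2 \<in> Z"
    have "Nz ((G x ^^ m) z1 - (G x ^^ m) z2) \<le> l ^ m * Nz (z1 - z2)" for m
    proof (induction m)
      case 0 then show ?case by simp
    next
      case (Suc m)
      have "Nz ((G x ^^ Suc m) z1 - (G x ^^ Suc m) z2) = Nz (G x ((G x ^^ m) z1) - G x ((G x ^^ m) z2))" by simp
      also have "\<dots> \<le> l * Nz ((G x ^^ m) z1 - (G x ^^ m) z2)" using Gz h Git[OF h(1)] by blast
      also have "\<dots> \<le> l * (l ^ m * Nz (z1 - z2))" using Suc.IH l0 by (rule mult_left_mono)
      finally show ?case by simp
    qed
    then show "Nz ((G x ^^ n) z1 - (G x ^^ n) z2) \<le> l ^ n * Nz (z1 - z2)" .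
  qed
  have zsfix: "\<forall>x\<in>X. (G x ^^ n) (zs x) = zs x"
  proof
    fix x assume x: "x \<in> X"
    have "(G x ^^ m) (zs x) = zs x" for m by (induction m) (use zsX x in auto)
    then show "(G x ^^ n) (zs x) = zs x" .
  qed
  have zsL: "\<forall>a\<in>X. \<forall>b\<in>X. Nz (zs a - zs b) \<le> g * Nx (a - b)"
  proof (intro ballI)
    fix a b assume h: "a \<in> X" "b \<in> X"
    have "Nz (zs a - zs b) = Nz (G a (zs a) - G b (zs b))" using zsX h by simp
    also have "\<dots> \<le> Nz (G a (zs a) - G b (zs a)) + Nz (G b (zs a) - G b (zs b))" by (rule isn_tri3[OF normZ])
    also have "\<dots> \<le> LG * Nx (a - b) + l * Nz (zs a - zs b)" using Gx Gz h zsZ by (intro add_mono) auto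
    finally have "(1 - l) * Nz (zs a - zs b) \<le> LG * Nx (a - b)" by (simp add: algebra_simps)
    then show "Nz (zs a - zs b) \<le> g * Nx (a - b)" unfolding g_def using l1 by (simp add: field_simps)
  qed
  have osf: "\<forall>x1\<in>X. \<forall>x2\<in>X. \<forall>z\<in>Z. x1 \<noteq> x2 \<longrightarrow> WP (f x1 z - f x2 z) (x1 - x2) \<le> \<xi> * (Nx (x1 - x2))\<^sup>2"
  proof (intro ballI impI)
    fix x1 x2 z assume h: "x1 \<in> X" "x2 \<in> X" "z \<in> Z" "x1 \<noteq> x2"
    have p: "0 < Nx (x1 - x2)" using h isn_pos[OF normX] by simp
    show "WP (f x1 z - f x2 z) (x1 - x2) \<le> \<xi> * (Nx (x1 - x2))\<^sup>2"
      by (rule os_from_sup[OF xi[unfolded osLip_x_def]]) (use h p in auto)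
  qed
  have osF: "\<forall>x1\<in>X. \<forall>x2\<in>X. x1 \<noteq> x2 \<longrightarrow> WP (f x1 (zs x1) - f x2 (zs x2)) (x1 - x2) \<le> - \<zeta> * (Nx (x1 - x2))\<^sup>2"
  proof (intro ballI impI)
    fix x1 x2 assume h: "x1 \<in> X" "x2 \<in> X" "x1 \<noteq> x2"
    have p: "0 < Nx (x1 - x2)" using h isn_pos[OF normX] by simp
    show "WP (f x1 (zs x1) - f x2 (zs x2)) (x1 - x2) \<le> - \<zeta> * (Nx (x1 - x2))\<^sup>2"
      unfolding zs_def
      by (rule os_from_sup[OF zeta(2)[unfolded osLip_def]]) (use h p in auto)
  qed
  have Tc: "phi \<xi> T * (l ^ n * g * L + L * g * (Lx + L * g) / \<zeta>) < 1 - l ^ n"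
  proof -
    define q where "q = l ^ n"
    define D where "D = l ^ n * g * L + L * g * (Lx + L * g) / \<zeta>"
    have q0: "q \<ge> 0" unfolding q_def using l0 by simp
    have q1: "q < 1"
    proof -
      have "l ^ n \<le> l ^ 1" using n l0 l1 by (intro power_decreasing) auto
      then show ?thesis unfolding q_def using l1 by simp
    qed
    have D0: "D > 0"
    proof -
      have "Lx + L * g > 0" using L0 g0 Lx0 by (simp add: add_nonneg_pos)
      then have "L * g * (Lx + L * g) > 0" using L0 g0 by simp
      then have "L * g * (Lx + L * g) / \<zeta> > 0" using zeta(1) by simp
      moreover have "l ^ n * g * L \<ge> 0" using l0 g0 L0 by simp
      ultimately show ?thesis unfolding D_def by linarith
    qed
    have TB: "ereal T < Tbound \<xi> \<zeta> Lx L LG l n" using T(2) unfolding Lx_def L_def LG_def l_def .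
    have Deq: "l ^ n * LG * L / (1 - l) + L * LG / (1 - l) * (Lx + L * LG / (1 - l)) / \<zeta> = D"
      unfolding D_def g_def by (simp add: algebra_simps)
    have TB2: "ereal T < (if \<xi> = 0 then ereal ((1 - q) / D)
        else (if \<xi> * (1 - q) / D + 1 \<le> 0 then \<infinity> else ereal (ln (\<xi> * (1 - q) / D + 1) / \<xi>)))"
      using TB unfolding Tbound_def Let_def Deq q_def .
    have fin: "phi \<xi> T * D < 1 - q"
    proof (cases "\<xi> = 0")
      case True
      then have "T < (1 - q) / D" using TB2 by simp
      then have "T * D < 1 - q" using D0 by (simp add: pos_less_divide_eq)
      then show ?thesis using True by (simp add: phi_def)
    next
      case False
      define A where "A = \<xi> * (1 - q) / D + 1"
      define u where "u = exp (\<xi> * T) - 1"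
      have phiu: "phi \<xi> T = u / \<xi>" unfolding phi_def u_def using False by simp
      have key: "u / \<xi> < (1 - q) / D"
      proof (cases "A \<le> 0")
        case True
        have xin: "\<xi> < 0"
        proof (rule ccontr)
          assume "\<not> \<xi> < 0"
          then have "\<xi> > 0" using False by simp
          then have "\<xi> * (1 - q) / D \<ge> 0" using q1 D0 by simp
          then show False using True A_def by simp
        qed
        have "u > -1" unfolding u_def by simp
        then have "u / \<xi> < (-1) / \<xi>" using xin by (rule divide_strict_right_mono_neg)
        also have "(-1) / \<xi> \<le> (1 - q) / D"
        proof -
          have "\<xi> * (1 - q) / D \<le> -1" using True A_def by simp
          then have "\<xi> * (1 - q) \<le> - D" using D0 by (simp add: divide_le_eq)
          then have "(- D) / \<xi> \<le> (\<xi> * (1 - q)) / \<xi>" using xin by (intro divide_right_mono_neg) auto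
          then have "- D / \<xi> \<le> (1 - q)" using xin by simp
          then have "(- 1 / \<xi>) * D \<le> (1 - q)" by simp
          then show ?thesis using D0 by (simp add: le_divide_eq)
        qed
        finally show ?thesis .
      next
        case Apos: False
        then have A0: "A > 0" by simp
        have TA: "T < ln A / \<xi>" using TB2 False Apos unfolding A_def by simp
        show ?thesis
        proof (cases "\<xi> > 0")
          case True
          then have "\<xi> * T < ln A" using TA by (simp add: less_divide_eq mult.commute)
          then have "exp (\<xi> * T) < A" using A0 by (metis exp_less_cancel_iff exp_ln)
          then have "u < \<xi> * (1 - q) / D" unfolding u_def A_def by simp
          then have "u / \<xi> < (\<xi> * (1 - q) / D) / \<xi>" using True by (rule divide_strict_right_mono)
          then show ?thesis using True by simp
        next
          case False2: False
          then have xin: "\<xi> < 0" using False by simp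
          then have "\<xi> * T > ln A" using TA by (simp add: neg_less_divide_eq mult.commute)
          then have "exp (\<xi> * T) > A" using A0 by (metis exp_less_cancel_iff exp_ln)
          then have "u > \<xi> * (1 - q) / D" unfolding u_def A_def by simp
          then have "u / \<xi> < (\<xi> * (1 - q) / D) / \<xi>" using xin by (rule divide_strict_right_mono_neg)
          then show ?thesis using xin by simp
        qed
      qed
      then show "phi \<xi> T * D < 1 - q" unfolding phiu using D0 by (simp add: pos_less_divide_eq)
    qed
    then show ?thesis unfolding D_def q_def .
  qed
  obtain K \<alpha> where K: "K > 0" "\<alpha> > 0"
    and est: "\<forall>x z. is_solution f G n T x z \<and> (\<forall>t\<ge>0. x t \<in> X \<and> z t \<in> Z) \<longrightarrow>
           (\<forall>t\<ge>0. Nx (x t) + Nz (z t) \<le> K * exp (- \<alpha> * t) * (Nx (x 0) + Nz (z 0)))"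
    using sol_estimate[OF normX normZ WP zero_in(1)
        fx fz Gn zsZ zsfix zsL zs0 f0 osf osF Lx0 L0 g0 l0 l1 zeta(1) T(1) Tc] by blast
  show ?thesis
  proof (intro exI conjI allI impI)
    show "(1::real) > 0" by simp
    show "(1::real) > 0" by simp
    show "K * sqrt 2 > 0" using K by simp
    show "\<alpha> > 0" using K by simp
  next
    fix X0 Z0 x z and t :: real
    assume H: "X0 \<subseteq> X \<and> Z0 \<subseteq> Z \<and> (\<forall>x z. is_solution f G n T x z \<and> x 0 \<in> X0 \<and> z 0 \<in> Z0 \<longrightarrow> (\<forall>t\<ge>0. x t \<in> X \<and> z t \<in> Z))"
      and s: "is_solution f G n T x z \<and> x 0 \<in> X0 \<and> z 0 \<in> Z0" and t: "0 \<le> t"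
    have inv: "\<forall>t\<ge>0. x t \<in> X \<and> z t \<in> Z" using H s by blast
    have b: "Nx (x t) + Nz (z t) \<le> K * exp (- \<alpha> * t) * (Nx (x 0) + Nz (z 0))" using est s inv t by blast
    have "sqrt (1 * (Nx (x t))\<^sup>2 + 1 * (Nz (z t))\<^sup>2) \<le> Nx (x t) + Nz (z t)"
      using sqrt_sum_le[OF nxn nzn] by simp
    also have "\<dots> \<le> K * exp (- \<alpha> * t) * (Nx (x 0) + Nz (z 0))" by (rule b)
    also have "\<dots> \<le> K * exp (- \<alpha> * t) * (sqrt 2 * sqrt ((Nx (x 0))\<^sup>2 + (Nz (z 0))\<^sup>2))"
      using K sum_le_sqrt[OF nxn nzn] by (intro mult_left_mono) auto
    also have "\<dots> = K * sqrt 2 * exp (- \<alpha> * t) * sqrt (1 * (Nx (x 0))\<^sup>2 + 1 * (Nz (z 0))\<^sup>2)" by simp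
    finally show "sqrt (1 * (Nx (x t))\<^sup>2 + 1 * (Nz (z t))\<^sup>2) \<le> K * sqrt 2 * exp (- \<alpha> * t) * sqrt (1 * (Nx (x 0))\<^sup>2 + 1 * (Nz (z 0))\<^sup>2)" .
  qed
qed


end
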